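(* Realize $T^*S^{n-1}=\{(\gamma,p)\in\mathbb R^{2n}:\langle\gamma,\gamma\rangle=1,\ \langle\gamma,p\rangle=0\}$ via the Legendre transformation $p=-\frac1{\varepsilon^2}\mathbf I(\gamma\wedge\dot\gamma)\gamma$, let $\dot\gamma=X_\gamma(\gamma,p)$ be its inverse and $h(\gamma,p)=\frac12\langle X_\gamma(\gamma,p),p\rangle$. Then the reduced equations of the rolling of a ball with a gyroscope over a sphere without slipping and twisting (i.e. $\delta l-\mathbf{JK}(\dot\gamma,\delta\gamma)=\mathbf f(\dot\gamma,\delta\gamma)$ for all $\delta\gamma\in T_\gamma S^{n-1}$) take on $T^*S^{n-1}$ the form $$\dot\gamma=X_\gamma(\gamma,p),\qquad \dot p=\frac{1-\varepsilon}{\varepsilon^3}\mathbf I(\gamma\wedge X_\gamma)X_\gamma+\frac1{\varepsilon^2}\kappa X_\gamma+\mu\gamma,$$ where $$\mu=\frac{\varepsilon-1}{\varepsilon^3}\langle\mathbf I(\gamma\wedge X_\gamma)X_\gamma,\gamma\rangle-2h(\gamma,p)+\frac1{\varepsilon^2}\langle X_\gamma,\kappa\gamma\rangle.$$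
   Context: Fix $n\ge3$, ball radius $a$, mass $m$, $D=ma^2$, sphere radius $b$, and $\varepsilon=b/(b+a)$ or $\varepsilon=b/(b-a)$. On $so(n)$ use $\langle X,Y\rangle=-\frac12\operatorname{tr}(XY)$; on $\mathbb R^n$ the Euclidean product. For $x,y\in\mathbb R^n$, $x\wedge y=xy^T-yx^T$. $\mathbf I=\mathbb I+D\,\mathrm{Id}_{so(n)}$ is a symmetric positive definite operator on $so(n)$, $\kappa\in so(n)$ fixed. Reduced Lagrangian $l(\gamma,\dot\gamma)=-\frac1{2\varepsilon^2}\langle\mathbf I(\gamma\wedge\dot\gamma)\gamma,\dot\gamma\rangle$ on $TS^{n-1}$, $\delta l=\langle\frac{\partial l}{\partial\gamma}-\frac d{dt}\frac{\partial l}{\partial\dot\gamma},\delta\gamma\rangle$, $\mathbf{JK}(\dot\gamma,\delta\gamma)=\frac{2\varepsilon-1}{\varepsilon^3}\langle\mathbf I(\gamma\wedge\dot\gamma)\dot\gamma,\delta\gamma\rangle$, $\mathbf f(\dot\gamma,\delta\gamma)=\frac1{\varepsilon^2}\langle\dot\gamma,\kappa\delta\gamma\rangle$. *)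

theory Defs
  imports "HOL-Analysis.Analysis"
begin

definition so_n :: "(real^'n^'n) set" where
  "so_n = {X. transpose X = - X}"

definition so_inner :: "real^'n^'n \<Rightarrow> real^'n^'n \<Rightarrow> real" where
  "so_inner X Y = - (1/2) * trace (X ** Y)"

definition wedge :: "real^'n \<Rightarrow> real^'n \<Rightarrow> real^'n^'n" where
  "wedge x y = (\<chi> i j. x$i * y$j - y$i * x$j)"

text \<open>Symmetric positive definite operator on so(n) (given as a map on all matrices,
 only its restriction to so(n) matters).\<close>
definition sym_pos_def_so :: "(real^'n^'n \<Rightarrow> real^'n^'n) \<Rightarrow> bool" where
  "sym_pos_def_so A \<longleftrightarrow>
     (\<forall>X\<in>so_n. A X \<in> so_n) \<and>
     (\<forall>X\<in>so_n. \<forall>Y\<in>so_n. A (X + Y) = A X + A Y) \<and>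
     (\<forall>X\<in>so_n. \<forall>c. A (c *\<^sub>R X) = c *\<^sub>R A X) \<and>
     (\<forall>X\<in>so_n. \<forall>Y\<in>so_n. so_inner (A X) Y = so_inner X (A Y)) \<and>
     (\<forall>X\<in>so_n. X \<noteq> 0 \<longrightarrow> so_inner (A X) X > 0)"

text \<open>Reduced Lagrangian l(gamma, gammadot) (natural extension to R^n x R^n).\<close>
definition red_lag :: "(real^'n^'n \<Rightarrow> real^'n^'n) \<Rightarrow> real \<Rightarrow> real^'n \<Rightarrow> real^'n \<Rightarrow> real" where
  "red_lag Ib eps g v = - (1 / (2 * eps^2)) * ((Ib (wedge g v) *v g) \<bullet> v)"

definition grad :: "(real^'n \<Rightarrow> real) \<Rightarrow> real^'n \<Rightarrow> real^'n" where
  "grad f x = (\<chi> i. frechet_derivative f (at x) (axis i 1))"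

definition delta_l :: "(real^'n^'n \<Rightarrow> real^'n^'n) \<Rightarrow> real \<Rightarrow> (real \<Rightarrow> real^'n) \<Rightarrow> (real \<Rightarrow> real^'n)
     \<Rightarrow> real \<Rightarrow> real^'n \<Rightarrow> real" where
  "delta_l Ib eps g g' t dg =
     (grad (\<lambda>x. red_lag Ib eps x (g' t)) (g t)
      - vector_derivative (\<lambda>s. grad (\<lambda>v. red_lag Ib eps (g s) v) (g' s)) (at t)) \<bullet> dg"

definition JK :: "(real^'n^'n \<Rightarrow> real^'n^'n) \<Rightarrow> real \<Rightarrow> real^'n \<Rightarrow> real^'n \<Rightarrow> real^'n \<Rightarrow> real" where
  "JK Ib eps g v dg = ((2 * eps - 1) / eps^3) * ((Ib (wedge g v) *v v) \<bullet> dg)"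

definition force :: "real^'n^'n \<Rightarrow> real \<Rightarrow> real^'n \<Rightarrow> real^'n \<Rightarrow> real" where
  "force kappa eps v dg = (1 / eps^2) * (v \<bullet> (kappa *v dg))"

definition legendre :: "(real^'n^'n \<Rightarrow> real^'n^'n) \<Rightarrow> real \<Rightarrow> real^'n \<Rightarrow> real^'n \<Rightarrow> real^'n" where
  "legendre Ib eps g v = - (1 / eps^2) *\<^sub>R (Ib (wedge g v) *v g)"

definition Xgam :: "(real^'n^'n \<Rightarrow> real^'n^'n) \<Rightarrow> real \<Rightarrow> real^'n \<Rightarrow> real^'n \<Rightarrow> real^'n" where
  "Xgam Ib eps g p = (THE v. v \<bullet> g = 0 \<and> legendre Ib eps g v = p)"

definition ham :: "(real^'n^'n \<Rightarrow> real^'n^'n) \<Rightarrow> real \<Rightarrow> real^'n \<Rightarrow> real^'n \<Rightarrow> real" where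
  "ham Ib eps g p = (1/2) * (Xgam Ib eps g p \<bullet> p)"

end

theory Submission
  imports Defs
begin

definition projso :: "real^'n^'n \<Rightarrow> real^'n^'n" where
  "projso X = (1/2) *\<^sub>R (X - transpose X)"

definition LinI :: "(real^'n^'n \<Rightarrow> real^'n^'n) \<Rightarrow> real^'n^'n \<Rightarrow> real^'n^'n" where
  "LinI I X = I (projso X)"

lemma projso_in: "projso X \<in> so_n"
  by (simp add: so_n_def projso_def transpose_def vec_eq_iff algebra_simps)

lemma projso_id: "X \<in> so_n \<Longrightarrow> projso X = X"
  by (simp add: so_n_def projso_def vec_eq_iff algebra_simps)

lemma projso_add: "projso (X + Y) = projso X + projso Y"
  by (simp add: projso_def transpose_def vec_eq_iff algebra_simps)

lemma projso_scale: "projso (c *\<^sub>R X) = c *\<^sub>R projso X"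
  by (simp add: projso_def transpose_def vec_eq_iff algebra_simps)

lemma LinI_linear: "sym_pos_def_so I \<Longrightarrow> linear (LinI I)"
  unfolding LinI_def sym_pos_def_so_def
  by (intro linearI) (simp_all add: projso_add projso_scale projso_in)

lemma LinI_so: "sym_pos_def_so I \<Longrightarrow> X \<in> so_n \<Longrightarrow> LinI I X = I X"
  by (simp add: LinI_def projso_id)

lemma LinI_in: "sym_pos_def_so I \<Longrightarrow> LinI I X \<in> so_n"
  by (simp add: LinI_def sym_pos_def_so_def projso_in)

lemma wedge_in: "wedge x y \<in> so_n"
  by (simp add: so_n_def wedge_def transpose_def vec_eq_iff)

lemma wedge_mv: "wedge x y *v z = (y \<bullet> z) *\<^sub>R x - (x \<bullet> z) *\<^sub>R y"
  by (simp add: wedge_def matrix_vector_mult_def vec_eq_iff inner_vec_def sum_distrib_left sum_distrib_right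
      sum_subtractf algebra_simps)

lemma skew_inner: assumes "A \<in> so_n" shows "(A *v x) \<bullet> y = - ((A *v y) \<bullet> x)"
proof -
  have "(A *v x) \<bullet> y = x \<bullet> (transpose A *v y)"
    by (metis dot_lmul_matrix inner_commute transpose_matrix_vector transpose_transpose)
  also have "\<dots> = - ((A *v y) \<bullet> x)" using assms
  proof -
    have "(- A) *v y = - (A *v y)" by (simp add: matrix_vector_mult_def vec_eq_iff sum_negf)
    then show ?thesis using assms by (simp add: so_n_def inner_commute)
  qed
  finally show ?thesis .
qed

lemma so_wedge: assumes "A \<in> so_n" shows "(A *v g) \<bullet> v = - so_inner A (wedge g v)"
proof -
  have tA: "transpose A = - A" using assms by (simp add: so_n_def)
  have sk: "A$k$i = - A$i$k" for i k
  proof -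
    have "(transpose A)$i$k = (-A)$i$k" using tA by simp
    then show ?thesis by (simp add: transpose_def)
  qed
  have "trace (A ** wedge g v) = (\<Sum>i\<in>UNIV. \<Sum>k\<in>UNIV. A$i$k * (g$k * v$i - v$k * g$i))"
    by (simp add: trace_def matrix_matrix_mult_def wedge_def)
  also have "\<dots> = (\<Sum>i\<in>UNIV. \<Sum>k\<in>UNIV. A$i$k * (g$k * v$i)) - (\<Sum>i\<in>UNIV. \<Sum>k\<in>UNIV. A$i$k * (v$k * g$i))"
    by (simp only: right_diff_distrib sum_subtractf)
  finally have t: "trace (A ** wedge g v) = (\<Sum>i\<in>UNIV. \<Sum>k\<in>UNIV. A$i$k * (g$k * v$i)) - (\<Sum>i\<in>UNIV. \<Sum>k\<in>UNIV. A$i$k * (v$k * g$i))" .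
  have "(\<Sum>i\<in>UNIV. \<Sum>k\<in>UNIV. A$i$k * (v$k * g$i)) = (\<Sum>k\<in>UNIV. \<Sum>i\<in>UNIV. A$i$k * (v$k * g$i))"
    by (rule sum.swap)
  also have "\<dots> = (\<Sum>k\<in>UNIV. \<Sum>i\<in>UNIV. - (A$k$i * (g$i * v$k)))"
  proof (intro sum.cong refl)
    fix k i
    have "A$i$k = - A$k$i" by (rule sk)
    then show "A$i$k * (v$k * g$i) = - (A$k$i * (g$i * v$k))" by (simp add: mult.commute)
  qed
  also have "\<dots> = - (\<Sum>k\<in>UNIV. \<Sum>i\<in>UNIV. A$k$i * (g$i * v$k))"
    by (simp only: sum_negf)
  finally have t2: "(\<Sum>i\<in>UNIV. \<Sum>k\<in>UNIV. A$i$k * (v$k * g$i)) = - (\<Sum>k\<in>UNIV. \<Sum>i\<in>UNIV. A$k$i * (g$i * v$k))" .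
  have "(A *v g) \<bullet> v = (\<Sum>i\<in>UNIV. (\<Sum>k\<in>UNIV. A$i$k * g$k) * v$i)"
    by (simp add: matrix_vector_mult_def inner_vec_def inner_real_def)
  also have "\<dots> = (\<Sum>i\<in>UNIV. \<Sum>k\<in>UNIV. A$i$k * (g$k * v$i))"
    by (simp only: sum_distrib_right mult.assoc)
  finally have t3: "(A *v g) \<bullet> v = (\<Sum>i\<in>UNIV. \<Sum>k\<in>UNIV. A$i$k * (g$k * v$i))" .
  define S where "S = (\<Sum>i\<in>UNIV. \<Sum>k\<in>UNIV. A$i$k * (g$k * v$i))"
  have e1: "so_inner A (wedge g v) = - (1/2) * (S - - S)"
    unfolding so_inner_def t t2 S_def ..
  have e2: "(A *v g) \<bullet> v = S" unfolding t3 S_def ..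
  show ?thesis unfolding e1 e2 by simp
qed

lemma so_inner_sym: "so_inner X Y = so_inner Y X"
  unfolding so_inner_def using trace_mul_sym[of X Y] by simp


lemma bb_mv: "bounded_bilinear (\<lambda>(A::real^'n^'n) (x::real^'n). A *v x)"
  unfolding bilinear_conv_bounded_bilinear[symmetric] bilinear_def
  by (auto intro!: linearI simp: algebra_simps scaleR_matrix_vector_assoc[symmetric])

lemma wedge_lin1: "linear (\<lambda>x. wedge x v)"
  by (intro linearI) (simp_all add: wedge_def vec_eq_iff algebra_simps)

lemma wedge_lin2: "linear (\<lambda>v. wedge x v)"
  by (intro linearI) (simp_all add: wedge_def vec_eq_iff algebra_simps)

lemma bb_wedge: "bounded_bilinear (wedge :: real^'n \<Rightarrow> real^'n \<Rightarrow> real^'n^'n)"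
  unfolding bilinear_conv_bounded_bilinear[symmetric] bilinear_def
  using wedge_lin1 wedge_lin2 by blast

lemma grad_eq: assumes "(f has_derivative (\<lambda>w. u \<bullet> w)) (at x)" shows "grad f x = u"
  using frechet_derivative_at[OF assms]
  by (simp add: grad_def vec_eq_iff inner_axis flip: frechet_derivative_at[OF assms])

lemma red_lag_Lin: "sym_pos_def_so I \<Longrightarrow>
   red_lag I eps x v = - (1 / (2 * eps^2)) * ((LinI I (wedge x v) *v x) \<bullet> v)"
  by (simp add: red_lag_def LinI_so wedge_in)

lemma sym_wedge: assumes I: "sym_pos_def_so I"
  shows "(I (wedge x w) *v y) \<bullet> z = (I (wedge y z) *v x) \<bullet> w"
proof -
  have s: "so_inner (I X) Y = so_inner (I Y) X" if "X \<in> so_n" "Y \<in> so_n" for X Y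
    using I that unfolding sym_pos_def_so_def by (metis so_inner_sym)
  have in1: "I (wedge x w) \<in> so_n" "I (wedge y z) \<in> so_n" using I wedge_in unfolding sym_pos_def_so_def by blast+
  have "(I (wedge x w) *v y) \<bullet> z = - so_inner (I (wedge x w)) (wedge y z)" by (rule so_wedge[OF in1(1)])
  also have "\<dots> = - so_inner (I (wedge y z)) (wedge x w)" using s wedge_in by metis
  also have "\<dots> = (I (wedge y z) *v x) \<bullet> w" by (rule so_wedge[OF in1(2), symmetric])
  finally show ?thesis .
qed

lemma grad_x: fixes x0 v :: "real^'n" assumes I: "sym_pos_def_so I"
  shows "grad (\<lambda>x. red_lag I eps x v) x0 = (1/eps^2) *\<^sub>R (I (wedge x0 v) *v v)"
proof -
  let ?L = "\<lambda>x. LinI I (wedge x v)"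
  have lin: "linear ?L" using linear_compose[OF wedge_lin1 LinI_linear[OF I]] by (simp add: o_def)
  have dL: "(?L has_derivative ?L) (at x0)"
    using lin by (simp add: linear_conv_bounded_linear bounded_linear_imp_has_derivative)
  have d1: "((\<lambda>x. ?L x *v x) has_derivative (\<lambda>w. ?L x0 *v w + ?L w *v x0)) (at x0)"
    using bounded_bilinear.FDERIV[OF bb_mv dL has_derivative_ident] .
  have d2: "((\<lambda>x. - (1 / (2 * eps^2)) * ((?L x *v x) \<bullet> v)) has_derivative
      (\<lambda>w. - (1 / (2 * eps^2)) * ((?L x0 *v w + ?L w *v x0) \<bullet> v))) (at x0)"
  proof -
    have "((\<lambda>x. (?L x *v x) \<bullet> v) has_derivative (\<lambda>w. (?L x0 *v w + ?L w *v x0) \<bullet> v + 0 \<bullet> (?L x0 *v x0))) (at x0)"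
      using has_derivative_inner[OF d1 has_derivative_const] by (simp add: inner_commute)
    then show ?thesis using has_derivative_mult_right by fastforce
  qed
  have eq: "- (1 / (2 * eps^2)) * ((?L x0 *v w + ?L w *v x0) \<bullet> v) = ((1/eps^2) *\<^sub>R (I (wedge x0 v) *v v)) \<bullet> w" for w
  proof -
    have a: "?L x0 = I (wedge x0 v)" "?L w = I (wedge w v)" using LinI_so[OF I wedge_in] by auto
    have b: "(I (wedge w v) *v x0) \<bullet> v = (I (wedge x0 v) *v w) \<bullet> v" using sym_wedge[OF I] by metis
    have c: "(I (wedge x0 v) *v w) \<bullet> v = - ((I (wedge x0 v) *v v) \<bullet> w)"
      using skew_inner I wedge_in unfolding sym_pos_def_so_def by blast
    show ?thesis unfolding a by (simp add: inner_add_left b c algebra_simps)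
  qed
  show ?thesis
    apply (rule grad_eq)
    using d2 unfolding red_lag_Lin[OF I] eq .
qed

lemma grad_v: fixes x0 v0 :: "real^'n" assumes I: "sym_pos_def_so I"
  shows "grad (\<lambda>v. red_lag I eps x0 v) v0 = legendre I eps x0 v0"
proof -
  let ?L = "\<lambda>v. LinI I (wedge x0 v) *v x0"
  have lin: "linear ?L"
  proof -
    have l1: "linear (\<lambda>v. LinI I (wedge x0 v))" using linear_compose[OF wedge_lin2 LinI_linear[OF I]] by (simp add: o_def)
    have l2: "linear (\<lambda>A::real^'n^'n. A *v x0)"
      by (auto intro!: linearI simp: algebra_simps scaleR_matrix_vector_assoc[symmetric])
    show ?thesis using linear_compose[OF l1 l2] by (simp add: o_def)
  qed
  have dL: "(?L has_derivative ?L) (at v0)"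
    using lin by (simp add: linear_conv_bounded_linear bounded_linear_imp_has_derivative)
  have d2: "((\<lambda>v. - (1 / (2 * eps^2)) * (?L v \<bullet> v)) has_derivative
      (\<lambda>w. - (1 / (2 * eps^2)) * (?L v0 \<bullet> w + ?L w \<bullet> v0))) (at v0)"
  proof -
    have "((\<lambda>x. ?L x \<bullet> x) has_derivative (\<lambda>w. ?L v0 \<bullet> w + ?L w \<bullet> v0)) (at v0)"
      using has_derivative_inner[OF dL has_derivative_ident] by simp
    then show ?thesis using has_derivative_mult_right by fastforce
  qed
  have eq: "- (1 / (2 * eps^2)) * (?L v0 \<bullet> w + ?L w \<bullet> v0) = legendre I eps x0 v0 \<bullet> w" for w
  proof -
    have a: "LinI I (wedge x0 v0) = I (wedge x0 v0)" "LinI I (wedge x0 w) = I (wedge x0 w)" using LinI_so[OF I wedge_in] by auto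
    have b: "(I (wedge x0 w) *v x0) \<bullet> v0 = (I (wedge x0 v0) *v x0) \<bullet> w" using sym_wedge[OF I] by metis
    show ?thesis unfolding a legendre_def by (simp add: b algebra_simps)
  qed
  show ?thesis
    apply (rule grad_eq)
    using d2 unfolding red_lag_Lin[OF I] eq .
qed


lemma tangent_perp:
  fixes G W :: "real^'n"
  assumes GG: "G \<bullet> G = 1"
  shows "(\<forall>dg. dg \<bullet> G = 0 \<longrightarrow> W \<bullet> dg = 0) \<longleftrightarrow> W = (W \<bullet> G) *\<^sub>R G"
proof
  assume h: "\<forall>dg. dg \<bullet> G = 0 \<longrightarrow> W \<bullet> dg = 0"
  define d where "d = W - (W \<bullet> G) *\<^sub>R G"
  have dG: "d \<bullet> G = 0" using GG by (simp add: d_def inner_diff_left)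
  have "W \<bullet> d = 0" using h dG by blast
  moreover have "G \<bullet> d = 0" using dG by (simp add: inner_commute)
  ultimately have "d \<bullet> d = 0" by (simp add: d_def inner_diff_left)
  then show "W = (W \<bullet> G) *\<^sub>R G" by (simp add: d_def)
next
  assume "W = (W \<bullet> G) *\<^sub>R G"
  then show "\<forall>dg. dg \<bullet> G = 0 \<longrightarrow> W \<bullet> dg = 0"
    by (metis inner_commute inner_scaleR_left mult_zero_right)
qed

lemma deriv_const_zero:
  assumes "(f has_derivative f') (at t)" and "\<forall>s. f s = (c::real)"
  shows "f' h = 0"
proof -
  have "f = (\<lambda>_. c)" using assms(2) by auto
  then have "(f has_derivative (\<lambda>_. 0)) (at t)" by simp
  then have "f' = (\<lambda>_. 0)" using has_derivative_unique assms(1) by blast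
  then show ?thesis by simp
qed

lemma legendre_unique:
  fixes g v w :: "real^'n"
  assumes I: "sym_pos_def_so I" and gg: "g \<bullet> g = 1" and e: "eps \<noteq> 0"
    and vg: "v \<bullet> g = 0" and wg: "w \<bullet> g = 0" and eq: "legendre I eps g w = legendre I eps g v"
  shows "w = v"
proof -
  define d where "d = w - v"
  have dg: "d \<bullet> g = 0" using vg wg by (simp add: d_def inner_diff_left)
  have lin: "linear (\<lambda>v. LinI I (wedge g v))" using linear_compose[OF wedge_lin2 LinI_linear[OF I]] by (simp add: o_def)
  have "I (wedge g w) - I (wedge g v) = I (wedge g d)"
    using linear_diff[OF lin, of w v] LinI_so[OF I wedge_in] by (simp add: d_def)
  moreover have "I (wedge g w) *v g = I (wedge g v) *v g" using eq e by (simp add: legendre_def)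
  ultimately have "I (wedge g d) *v g = 0" by (metis matrix_vector_mult_diff_rdistrib right_minus_eq)
  then have "so_inner (I (wedge g d)) (wedge g d) = 0"
    using so_wedge[of "I (wedge g d)" g d] I wedge_in unfolding sym_pos_def_so_def by auto
  then have "wedge g d = 0" using I wedge_in unfolding sym_pos_def_so_def by force
  then have "wedge g d *v g = 0" by simp
  then have "d = 0" using gg dg by (simp add: wedge_mv)
  then show ?thesis by (simp add: d_def)
qed

lemma Xgam_eq:
  fixes g v :: "real^'n"
  assumes I: "sym_pos_def_so I" and gg: "g \<bullet> g = 1" and e: "eps \<noteq> 0" and vg: "v \<bullet> g = 0"
  shows "Xgam I eps g (legendre I eps g v) = v"
  unfolding Xgam_def
  by (rule the_equality) (use assms legendre_unique in blast)+

theorem proposition7p6: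
  fixes a b m eps :: real
    and II :: "real^'n^'n \<Rightarrow> real^'n^'n"
    and kappa :: "real^'n^'n"
    and g g' g'' :: "real \<Rightarrow> real^'n"
  defines "Ib \<equiv> (\<lambda>X. II X + (m * a^2) *\<^sub>R X)"
  defines "p \<equiv> (\<lambda>s. legendre Ib eps (g s) (g' s))"
  assumes n3: "CARD('n) \<ge> 3"
    and a: "a > 0" and b: "b > 0" and m: "m > 0"
    and eps: "eps = b / (b + a) \<or> (b \<noteq> a \<and> eps = b / (b - a))"
    and Ib: "sym_pos_def_so Ib"
    and kappa: "kappa \<in> so_n"
    and sphere: "\<forall>s. norm (g s) = 1"
    and d1: "\<forall>s. (g has_vector_derivative g' s) (at s)"
    and d2: "\<forall>s. (g' has_vector_derivative g'' s) (at s)"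
  shows "(\<forall>dg. dg \<bullet> g t = 0 \<longrightarrow>
            delta_l Ib eps g g' t dg - JK Ib eps (g t) (g' t) dg = force kappa eps (g' t) dg)
       \<longleftrightarrow>
         (let X = Xgam Ib eps (g t) (p t);
              mu = ((eps - 1) / eps^3) * ((Ib (wedge (g t) X) *v X) \<bullet> g t)
                   - 2 * ham Ib eps (g t) (p t) + (1 / eps^2) * (X \<bullet> (kappa *v g t))
          in g' t = X \<and>
             vector_derivative p (at t) =
               ((1 - eps) / eps^3) *\<^sub>R (Ib (wedge (g t) X) *v X)
               + (1 / eps^2) *\<^sub>R (kappa *v X) + mu *\<^sub>R g t)"
  proof -
  have I: "sym_pos_def_so Ib" by (rule Ib)
  have e: "eps \<noteq> 0" using eps a b by auto
  define G V where "G = g t" and "V = g' t"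
  have GG: "G \<bullet> G = 1" using sphere by (simp add: G_def power2_norm_eq_inner[symmetric])
  have dg: "\<And>s. (g has_derivative (\<lambda>h. h *\<^sub>R g' s)) (at s)" using d1 by (simp add: has_vector_derivative_def)
  have dg': "\<And>s. (g' has_derivative (\<lambda>h. h *\<^sub>R g'' s)) (at s)" using d2 by (simp add: has_vector_derivative_def)
  have VG: "V \<bullet> G = 0"
  proof -
    have "((\<lambda>s. g s \<bullet> g s) has_derivative (\<lambda>h. g t \<bullet> (h *\<^sub>R g' t) + (h *\<^sub>R g' t) \<bullet> g t)) (at t)"
      by (rule has_derivative_inner[OF dg dg])
    moreover have "\<forall>s. g s \<bullet> g s = 1" using sphere by (simp add: power2_norm_eq_inner[symmetric])
    ultimately have "g t \<bullet> (1 *\<^sub>R g' t) + (1 *\<^sub>R g' t) \<bullet> g t = 0" by (rule deriv_const_zero)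
    then show ?thesis by (simp add: G_def V_def inner_commute)
  qed
  define A where "A = Ib (wedge G V)"
  have Aso: "A \<in> so_n" using I wedge_in unfolding A_def sym_pos_def_so_def by blast
  have pt: "p t = - (1 / eps^2) *\<^sub>R (A *v G)" by (simp add: p_def legendre_def A_def G_def V_def)
  have pL: "p = (\<lambda>s. - (1 / eps^2) *\<^sub>R (LinI Ib (wedge (g s) (g' s)) *v g s))"
    by (simp add: fun_eq_iff p_def legendre_def LinI_so[OF I wedge_in])
  have bl: "bounded_linear (LinI Ib)" using LinI_linear[OF I] by (simp add: linear_conv_bounded_linear)
  have "p differentiable (at t)"
  proof -
    note dW = bounded_bilinear.FDERIV[OF bb_wedge dg dg']
    note dLW = bounded_linear.has_derivative[OF bl dW]
    note dM = bounded_bilinear.FDERIV[OF bb_mv dLW dg]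
    note bounded_linear.has_derivative[OF bounded_linear_scaleR_right[of "- (1 / eps^2)"] dM]
    then show ?thesis unfolding pL by (rule differentiableI)
  qed
  then have dp: "(p has_vector_derivative vector_derivative p (at t)) (at t)"
    by (simp add: vector_derivative_works)
  define P' where "P' = vector_derivative p (at t)"
  have PG: "P' \<bullet> G = - (p t \<bullet> V)"
  proof -
    have dp': "(p has_derivative (\<lambda>h. h *\<^sub>R P')) (at t)" using dp by (simp add: P'_def has_vector_derivative_def)
    have "((\<lambda>s. p s \<bullet> g s) has_derivative (\<lambda>h. p t \<bullet> (h *\<^sub>R g' t) + (h *\<^sub>R P') \<bullet> g t)) (at t)"
      by (rule has_derivative_inner[OF dp' dg])
    moreover have "\<forall>s. p s \<bullet> g s = 0"
    proof
      fix s
      have "Ib (wedge (g s) (g' s)) \<in> so_n" using I wedge_in unfolding sym_pos_def_so_def by blast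
      then have "(Ib (wedge (g s) (g' s)) *v g s) \<bullet> g s = - ((Ib (wedge (g s) (g' s)) *v g s) \<bullet> g s)"
        by (rule skew_inner)
      then have "(Ib (wedge (g s) (g' s)) *v g s) \<bullet> g s = 0" by linarith
      then show "p s \<bullet> g s = 0" by (simp add: p_def legendre_def)
    qed
    ultimately have "p t \<bullet> (1 *\<^sub>R g' t) + (1 *\<^sub>R P') \<bullet> g t = 0" by (rule deriv_const_zero)
    then show ?thesis by (simp add: G_def V_def)
  qed
  have X: "Xgam Ib eps (g t) (p t) = V"
    unfolding p_def G_def[symmetric] V_def[symmetric] by (rule Xgam_eq[OF I GG e VG])
  have gx: "grad (\<lambda>x. red_lag Ib eps x V) G = (1/eps^2) *\<^sub>R (A *v V)"
    by (simp add: grad_x[OF I] A_def)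
  have gv: "(\<lambda>s. grad (\<lambda>v. red_lag Ib eps (g s) v) (g' s)) = p"
    by (simp add: grad_v[OF I] p_def fun_eq_iff)
  define W where "W = ((1 - eps) / eps^3) *\<^sub>R (A *v V) + (1 / eps^2) *\<^sub>R (kappa *v V) - P'"
  have lhs: "delta_l Ib eps g g' t dg - JK Ib eps (g t) (g' t) dg - force kappa eps (g' t) dg = W \<bullet> dg" for dg
  proof -
    have k0: "(kappa *v dg) \<bullet> V = - ((kappa *v V) \<bullet> dg)" by (rule skew_inner[OF kappa])
    have k: "V \<bullet> (kappa *v dg) = - ((kappa *v V) \<bullet> dg)" using k0 by (metis inner_commute)
    have c: "(1 - eps) / eps^3 = 1/eps^2 - (2 * eps - 1) / eps^3" using e by (simp add: field_simps power3_eq_cube power2_eq_square)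
    show ?thesis
      unfolding delta_l_def gx gv JK_def force_def W_def P'_def[symmetric] G_def[symmetric] V_def[symmetric] A_def[symmetric] c
      by (simp add: k inner_diff_left inner_add_left algebra_simps)
  qed
  define mu where "mu = ((eps - 1) / eps^3) * ((A *v V) \<bullet> G) - 2 * ham Ib eps G (p t) + (1 / eps^2) * (V \<bullet> (kappa *v G))"
  have WG: "W \<bullet> G = - mu"
  proof -
    have h: "ham Ib eps G (p t) = (1/2) * (V \<bullet> p t)" unfolding ham_def using X by (simp add: G_def)
    have k0: "(kappa *v V) \<bullet> G = - ((kappa *v G) \<bullet> V)" by (rule skew_inner[OF kappa])
    have k: "(kappa *v V) \<bullet> G = - (V \<bullet> (kappa *v G))" using k0 by (metis inner_commute)
    have w: "W \<bullet> G = ((1-eps)/eps^3) * ((A *v V) \<bullet> G) + (1/eps^2) * ((kappa *v V) \<bullet> G) - P' \<bullet> G"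
      by (simp add: W_def inner_diff_left inner_add_left)
    have pv: "p t \<bullet> V = V \<bullet> p t" by (rule inner_commute)
    have c3: "(1-eps)/eps^3 = - ((eps-1)/eps^3)" by (metis minus_diff_eq minus_divide_left)
    show ?thesis unfolding w mu_def h k PG pv c3 by linarith
  qed
  have "(\<forall>dg. dg \<bullet> g t = 0 \<longrightarrow> delta_l Ib eps g g' t dg - JK Ib eps (g t) (g' t) dg = force kappa eps (g' t) dg)
     \<longleftrightarrow> W = (- mu) *\<^sub>R G"
  proof -
    have q: "(delta_l Ib eps g g' t dg - JK Ib eps (g t) (g' t) dg = force kappa eps (g' t) dg) \<longleftrightarrow> W \<bullet> dg = 0" for dg
      using lhs[of dg] by (intro iffI) linarith+
    have "(\<forall>dg. dg \<bullet> g t = 0 \<longrightarrow> delta_l Ib eps g g' t dg - JK Ib eps (g t) (g' t) dg = force kappa eps (g' t) dg)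
      \<longleftrightarrow> (\<forall>dg. dg \<bullet> G = 0 \<longrightarrow> W \<bullet> dg = 0)" unfolding q G_def ..
    also have "\<dots> \<longleftrightarrow> W = (W \<bullet> G) *\<^sub>R G" by (rule tangent_perp[OF GG])
    finally show ?thesis unfolding WG by simp
  qed
  also have "\<dots> \<longleftrightarrow> P' = ((1 - eps) / eps^3) *\<^sub>R (A *v V) + (1 / eps^2) *\<^sub>R (kappa *v V) + mu *\<^sub>R G"
    unfolding W_def by (auto simp: algebra_simps)
  finally show ?thesis
    unfolding Let_def X mu_def P'_def G_def V_def A_def by simp
qed

end
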